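(* For every integer $m\geq 0$, $$\frac{H_{m+1}-1}{\log 2}\leq e_m<\frac{H_{m+1}}{\log 2}-0.161<\frac{H_{m+1}}{\log 2}.$$
   Context: $H_n=\sum_{j=1}^{n}\frac1j$ denotes the $n$-th harmonic number. The sequence $(e_m)_{m\geq0}$ of rational numbers is defined by $e_0=0$ and, for $m\geq1$, $$e_m=\frac{2^{m+1}+\sum_{j=1}^{m}\binom{m+1}{j}e_{m-j}}{2^{m+1}-2}.$$ *)

theory Defs
  imports "HOL-Analysis.Analysis"
begin

function e_seq :: "nat \<Rightarrow> rat" where
  "e_seq m = (if m = 0 then 0 else
     (2 ^ (m + 1) + (\<Sum>j\<in>{1..m}. of_nat ((m + 1) choose j) * e_seq (m - j)))
       / (2 ^ (m + 1) - 2))"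
  by auto
termination
  by (relation "Wellfounded.measure id") auto

declare e_seq.simps [simp del]

end

theory Submission
  imports Defs
begin

definition lf :: "nat \<Rightarrow> real" where "lf i = 1 / (real (i+1) * 2^(i+1))"
definition S :: "nat \<Rightarrow> real" where "S n = sum lf {..<n}"

lemma lf_le: "lf i \<le> (1/2)^(i+1)"
  unfolding lf_def power_one_over by (rule divide_left_mono) auto

lemma lf_nonneg: "lf i \<ge> 0" unfolding lf_def by simp

lemma summable_lf: "summable lf"
  by (rule summable_comparison_test[of _ "\<lambda>i. (1/2::real)^(i+1)"])
     (use lf_le lf_nonneg in auto)

lemma ln2_sum: "ln 2 = suminf lf"
proof -
  have "ln (1/2::real) = (\<Sum> n. (-1)^n * (1 / real (n + 1)) * (1/2 - 1)^(Suc n))"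
    by (rule ln_series) auto
  also have "(\<lambda>n. (-1)^n * (1 / real (n + 1)) * (1/2 - 1::real)^(Suc n)) = (\<lambda>n. - lf n)"
  proof
    fix n
    have "(1/2 - 1::real)^(Suc n) = (-(1/2))^Suc n" by simp
    also have "\<dots> = (-1)^Suc n * (1/2)^Suc n" by (rule power_minus)
    finally have a: "(1/2 - 1::real)^(Suc n) = (-1)^Suc n * (1/2)^Suc n" .
    have b: "((-1::real)^n) * (-1)^Suc n = -1" by (simp flip: power_mult_distrib)
    have "(-1)^n * (1 / real (n + 1)) * (1/2 - 1::real)^(Suc n)
        = ((-1::real)^n * (-1)^Suc n) * (1 / real (n + 1) * (1/2)^Suc n)"
      unfolding a by (simp only: mult_ac)
    also have "\<dots> = - lf n" unfolding b lf_def power_one_over by simp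
    finally show "(-1)^n * (1 / real (n + 1)) * (1/2 - 1::real)^(Suc n) = - lf n" .
  qed
  also have "(\<Sum>n. - lf n) = - suminf lf" using summable_lf by (rule suminf_minus)
  finally show ?thesis by (simp add: ln_div)
qed

lemma S_le_ln2: "S n \<le> ln 2"
  unfolding ln2_sum S_def using summable_lf lf_nonneg by (intro sum_le_suminf) auto

lemma ln2_le_S: "ln 2 - S n \<le> 1 / (real (n+1) * 2^n)"
proof -
  have "suminf lf = (\<Sum>i. lf (i + n)) + S n"
    unfolding S_def using summable_lf by (rule suminf_split_initial_segment)
  moreover have "(\<Sum>i. lf (i + n)) \<le> (\<Sum>i. (1/(real (n+1)) * (1/2)^(n+1)) * (1/2)^i)"
  proof (rule suminf_le)
    show "summable (\<lambda>i. lf (i + n))" using summable_lf by (simp add: summable_iff_shift)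
    show "summable (\<lambda>i. (1/(real (n+1)) * (1/2)^(n+1)) * (1/2::real)^i)"
      by (intro summable_mult summable_geometric) simp
    fix i
    have "lf (i + n) = 1 / (real (i+n+1) * 2^(i+n+1))" by (simp add: lf_def)
    also have "\<dots> \<le> 1 / (real (n+1) * 2^(i+n+1))"
      by (rule divide_left_mono) auto
    also have "\<dots> = (1/(real (n+1)) * (1/2)^(n+1)) * (1/2::real)^i"
      unfolding power_one_over by (simp add: power_add)
    finally show "lf (i + n) \<le> (1/(real (n+1)) * (1/2)^(n+1)) * (1/2::real)^i" .
  qed
  moreover have "(\<Sum>i. (1/(real (n+1)) * (1/2)^(n+1)) * (1/2::real)^i) = 1 / (real (n+1) * 2^n)"
  proof -
    have "(\<Sum>i. (1/(real (n+1)) * (1/2)^(n+1)) * (1/2::real)^i) = (1/(real (n+1)) * (1/2)^(n+1)) * (\<Sum>i. (1/2::real)^i)"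
      by (rule suminf_mult) (rule summable_geometric, simp)
    also have "(\<Sum>i. (1/2::real)^i) = 2" using suminf_geometric[of "1/2::real"] by simp
    also have "(1/(real (n+1)) * (1/2)^(n+1)) * 2 = 1 / (real (n+1) * 2^n)"
      unfolding power_one_over by simp
    finally show ?thesis .
  qed
  ultimately show ?thesis unfolding ln2_sum by linarith
qed

lemma S7: "S 7 = 1163/1680"
  by (simp add: S_def lf_def eval_nat_numeral)

lemma ln2_upper: "ln 2 \<le> (0.6933::real)"
  using ln2_le_S[of 7] unfolding S7 by simp

lemma binom_inv: "(\<Sum>k\<le>n. real (n choose k) / real (k+1)) = (2^(n+1) - 1) / real (n+1)"
proof -
  have "(\<Sum>k\<le>n. real (n choose k) / real (k+1)) = (\<Sum>k\<le>n. real (Suc n choose Suc k) / real (n+1))"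
  proof (rule sum.cong[OF refl])
    fix k
    have "real (Suc k) * real (Suc n choose Suc k) = real (Suc n) * real (n choose k)"
      using Suc_times_binomial[of k n] by (metis of_nat_mult)
    then show "real (n choose k) / real (k+1) = real (Suc n choose Suc k) / real (n+1)"
      by (simp add: field_simps)
  qed
  also have "\<dots> = (\<Sum>k\<le>n. real (Suc n choose Suc k)) / real (n+1)"
    by (simp add: sum_divide_distrib)
  also have "(\<Sum>k\<le>n. real (Suc n choose Suc k)) = 2^(n+1) - 1"
  proof -
    have r: "(\<Sum>k\<le>Suc n. real (Suc n choose k)) = 2^(n+1)"
      using choose_row_sum[of "Suc n"] by (metis of_nat_numeral of_nat_power of_nat_sum Suc_eq_plus1)
    have "(\<Sum>k\<le>Suc n. real (Suc n choose k)) = real (Suc n choose 0) + (\<Sum>k\<le>n. real (Suc n choose Suc k))"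
      by (rule sum.atMost_Suc_shift)
    then show ?thesis using r by simp
  qed
  finally show ?thesis .
qed

lemma binom_harm: "(\<Sum>k\<le>n. real (n choose k) * harm k) = 2^n * (harm n - S n)"
proof (induction n)
  case 0 then show ?case by (simp add: S_def harm_def)
next
  case (Suc n)
  have h0: "harm 0 = (0::real)" by (simp add: harm_expand(1))
  have "(\<Sum>k\<le>Suc n. real (Suc n choose k) * harm k) = real (Suc n choose 0) * harm 0 + (\<Sum>k\<le>n. real (Suc n choose Suc k) * harm (Suc k))"
    by (rule sum.atMost_Suc_shift)
  also have "\<dots> = (\<Sum>k\<le>n. real (Suc n choose Suc k) * harm (Suc k))" by (simp only: h0 mult_zero_right add_0)
  also have "\<dots> = (\<Sum>k\<le>n. real (n choose k) * harm (Suc k)) + (\<Sum>k\<le>n. real (n choose Suc k) * harm (Suc k))"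
    by (simp only: binomial_Suc_Suc of_nat_add distrib_right sum.distrib)
  also have "(\<Sum>k\<le>n. real (n choose k) * harm (Suc k)) = (\<Sum>k\<le>n. real (n choose k) * harm k) + (\<Sum>k\<le>n. real (n choose k) / real (k+1))"
    by (simp add: harm_Suc distrib_left sum.distrib divide_inverse add_ac)
  also have "(\<Sum>k\<le>n. real (n choose Suc k) * harm (Suc k)) = (\<Sum>k\<le>n. real (n choose k) * harm k)"
  proof -
    have "(\<Sum>k\<le>Suc n. real (n choose k) * harm k) = real (n choose 0) * harm 0 + (\<Sum>k\<le>n. real (n choose Suc k) * harm (Suc k))"
      by (rule sum.atMost_Suc_shift)
    moreover have "(\<Sum>k\<le>Suc n. real (n choose k) * harm k) = (\<Sum>k\<le>n. real (n choose k) * harm k)"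
      by (simp only: sum.atMost_Suc binomial_eq_0[of n "Suc n"] lessI of_nat_0 mult_zero_left add_0_right)
    ultimately show ?thesis by (simp add: h0)
  qed
  also have "(\<Sum>k\<le>n. real (n choose k) / real (k+1)) = (2^(n+1) - 1) / real (n+1)" by (rule binom_inv)
  finally have eq: "(\<Sum>k\<le>Suc n. real (Suc n choose k) * harm k) = 2 * (2 ^ n * (harm n - S n)) + (2^(n+1) - 1) / real (n+1)"
    using Suc.IH by simp
  have s1: "S (Suc n) = S n + 1 / (real (n+1) * 2^(n+1))" by (simp add: S_def lf_def)
  have h1: "harm (Suc n) = harm n + 1 / real (n+1)" by (simp add: harm_Suc divide_inverse)
  have alg: "2*(x*(h - s)) + (2*x - 1)/N = (2*x)*((h + 1/N) - (s + 1/(N*(2*x))))"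
    if "x > 0" "N > 0" for x h s N :: real
    using that by (simp add: field_simps)
  show ?case unfolding eq s1 h1 power_Suc Suc_eq_plus1[symmetric]
    using alg[of "2^n" "real (Suc n)" "harm n" "S n"] by simp
qed

abbreviation E :: "nat \<Rightarrow> real" where "E m \<equiv> real_of_rat (e_seq m)"

lemma E0: "E 0 = 0" by (simp add: e_seq.simps)

lemma E1: "E 1 = 2" by (simp add: e_seq.simps)

lemma E_rec_raw:
  assumes "m \<ge> 1"
  shows "(2^(m+1) - 2) * E m = 2^(m+1) + (\<Sum>j\<in>{1..m}. real ((m + 1) choose j) * E (m - j))"
proof -
  have d: "(2::real)^(m+1) - 2 \<noteq> 0"
  proof -
    have "(2::real)^(m+1) \<ge> 2^2" by (rule power_increasing) (use assms in auto)
    then show ?thesis by simp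
  qed
  have "E m = (2^(m+1) + (\<Sum>j\<in>{1..m}. real ((m + 1) choose j) * E (m - j))) / (2^(m+1) - 2)"
    using assms by (subst e_seq.simps) (simp add: of_rat_divide of_rat_add of_rat_sum of_rat_mult of_rat_diff of_rat_power)
  then show ?thesis using d by (simp add: field_simps)
qed

lemma reidx:
  "(\<Sum>j\<in>{1..m}. real ((m + 1) choose j) * E (m - j)) = (\<Sum>i<m. real ((m + 1) choose (i + 1)) * E i)"
proof (rule sum.reindex_bij_witness[of _ "\<lambda>i. m - i" "\<lambda>j. m - j"])
  fix a assume a: "a \<in> {1..m}"
  have "(m + 1) choose a = (m + 1) choose (m + 1 - a)" using a by (intro binomial_symmetric) auto
  also have "m + 1 - a = m - a + 1" using a by auto
  finally show "real ((m + 1) choose (m - a + 1)) * E (m - a) = real ((m + 1) choose a) * E (m - a)" by simp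
qed auto

lemma E_rec:
  assumes "m \<ge> 1"
  shows "(2^(m+1) - 2) * E m = 2^(m+1) + (\<Sum>i<m. real ((m + 1) choose (i + 1)) * E i)"
  using E_rec_raw[OF assms] unfolding reidx .

lemma split_sum: "(\<Sum>k\<le>Suc m. f k) = f 0 + (\<Sum>i<m. f (Suc i)) + (f (Suc m) :: real)"
proof -
  have "(\<Sum>k\<le>Suc m. f k) = f 0 + (\<Sum>k\<le>m. f (Suc k))" by (rule sum.atMost_Suc_shift)
  moreover have "(\<Sum>k\<le>m. f (Suc k)) = (\<Sum>i<m. f (Suc i)) + f (Suc m)"
    by (simp add: lessThan_Suc_atMost[symmetric])
  ultimately show ?thesis by simp
qed

lemma C1: "(\<Sum>i<m. real ((m + 1) choose (i + 1)) * harm (i + 1)) = 2^(m+1) * (harm (m+1) - S (m+1)) - harm (m+1)"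
  using split_sum[of "\<lambda>k. real ((m + 1) choose k) * harm k" m] binom_harm[of "m+1"]
  by (simp add: harm_expand(1))

lemma C2: "(\<Sum>i<m. real ((m + 1) choose (i + 1))) = 2^(m+1) - 2"
proof -
  have "(\<Sum>k\<le>Suc m. real (Suc m choose k)) = 2^(m+1)"
    using choose_row_sum[of "Suc m"] by (metis of_nat_numeral of_nat_power of_nat_sum Suc_eq_plus1)
  then show ?thesis using split_sum[of "\<lambda>k. real ((m + 1) choose k)" m] by simp
qed

lemma harm_le: "n \<ge> 1 \<Longrightarrow> harm n \<le> (real n + 1) / (2::real)"
proof (induction n)
  case 0 then show ?case by simp
next
  case (Suc n)
  show ?case
  proof (cases "n = 0")
    case True then show ?thesis by (simp add: harm_expand)
  next
    case False
    then have "harm n \<le> (real n + 1) / (2::real)" using Suc by simp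
    moreover have "inverse (real (Suc n)) \<le> (1/2::real)" using False
      by (simp add: field_simps)
    ultimately show ?thesis by (simp add: harm_Suc)
  qed
qed

lemma low: "(harm (m + 1) - 1) / ln 2 \<le> E m"
proof (induction m rule: less_induct)
  case (less m)
  show ?case
  proof (cases "m = 0")
    case True then show ?thesis by (simp add: E0 harm_expand)
  next
    case False
    define P :: real where "P = 2^(m+1)"
    define L :: real where "L = ln 2"
    define H :: real where "H = harm (m+1)"
    define Sn where "Sn = S (m+1)"
    have L0: "L > 0" unfolding L_def by simp
    have P4: "P \<ge> 4" unfolding P_def using False
      by (metis One_nat_def Suc_le_eq add_le_mono1 le_add2 not_gr_zero numeral_le_iff numeral_Bit0 one_add_one power_increasing[of 2 "m+1" 2] power2_eq_square semiring_norm(69) one_le_numeral mult_2 numeral_Bit0_eq_double of_nat_numeral)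
    have SL: "Sn \<le> L" unfolding Sn_def L_def by (rule S_le_ln2)
    have "(P - 2) * E m = P + (\<Sum>i<m. real ((m + 1) choose (i + 1)) * E i)"
      unfolding P_def using E_rec False by simp
    also have "\<dots> \<ge> P + (\<Sum>i<m. real ((m + 1) choose (i + 1)) * ((harm (i + 1) - 1) / L))"
      unfolding L_def using less by (intro add_left_mono sum_mono mult_left_mono) auto
    moreover have "(\<Sum>i<m. real ((m + 1) choose (i + 1)) * ((harm (i + 1) - 1) / L))
       = ((\<Sum>i<m. real ((m + 1) choose (i + 1)) * harm (i + 1)) - (\<Sum>i<m. real ((m + 1) choose (i + 1)))) / L"
      unfolding sum_subtractf[symmetric] sum_divide_distrib
      by (rule sum.cong) (simp_all add: right_diff_distrib diff_divide_distrib)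
    ultimately have ineq: "(P - 2) * E m \<ge> P + ((P * (H - Sn) - H) - (P - 2)) / L"
      unfolding C1 C2 P_def H_def Sn_def by simp
    have "P + ((P * (H - Sn) - H) - (P - 2)) / L - (P - 2) * ((H - 1) / L) = (P * (L - Sn) + H) / L"
      using L0 by (simp add: field_simps)
    also have "\<dots> \<ge> 0" using SL L0 P4 harm_nonneg[of "m+1"] unfolding H_def
      by (intro divide_nonneg_pos add_nonneg_nonneg mult_nonneg_nonneg) auto
    finally have "(P - 2) * ((H - 1) / L) \<le> (P - 2) * E m" using ineq by linarith
    then have "(H - 1) / L \<le> E m" using P4 by (subst (asm) mult_le_cancel_left_pos) auto
    then show ?thesis unfolding H_def L_def .
  qed
qed

lemma up: "E m \<le> harm (m + 1) / ln 2 - 0.162 - (if m = 0 then 1 / ln 2 - 0.162 else 0)"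
proof (induction m rule: less_induct)
  case (less m)
  consider "m = 0" | "m = 1" | "m \<ge> 2" by linarith
  then show ?case
  proof cases
    case 1 then show ?thesis by (simp add: E0 harm_expand)
  next
    case 2
    have L0: "ln (2::real) > 0" by simp
    have m2: "m + 1 = 2" using 2 by simp
    have h: "harm (m + 1) = (3/2::real)" unfolding m2 by (simp add: harm_expand)
    have e: "E m = 2" using 2 E1 by simp
    have "2 \<le> (3/2) / ln 2 - (0.162::real)"
      using ln2_upper L0 by (simp add: field_simps)
    then show ?thesis using 2 unfolding h e by simp
  next
    case 3
    define n where "n = m + 1"
    define P :: real where "P = 2^n"
    define L :: real where "L = ln 2"
    define H :: real where "H = harm n"
    define Sn where "Sn = S n"
    define c :: real where "c = 0.162"
    define U where "U = (\<lambda>i. harm (i + 1) / L - c - (if i = 0 then 1 / L - c else 0))"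
    have L0: "L > 0" unfolding L_def by simp
    have L1: "L < 1" unfolding L_def by (rule ln_2_less_1)
    have n3: "real n \<ge> 3" unfolding n_def using 3 by simp
    have P8: "P \<ge> 8" unfolding P_def
    proof -
      have "(2::real)^n \<ge> 2^3" by (rule power_increasing) (use 3 n_def in auto)
      then show "(2::real)^n \<ge> 8" by simp
    qed
    have tail: "P * (L - Sn) \<le> 1 / 4"
    proof -
      have "L - Sn \<le> 1 / (real (n+1) * 2^n)" unfolding L_def Sn_def by (rule ln2_le_S)
      then have "P * (L - Sn) \<le> P * (1 / (real (n+1) * 2^n))" using P8 by (intro mult_left_mono) auto
      also have "\<dots> = 1 / real (n+1)" unfolding P_def by simp
      also have "\<dots> \<le> 1/4" using n3 by (simp add: field_simps)
      finally show ?thesis .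
    qed
    have Hle: "H \<le> (real n + 1) / 2" unfolding H_def by (rule harm_le) (simp add: n_def)
    have key: "P * (L - Sn) + H \<le> real n * (1 - c * L)"
    proof -
      have "419 / 500 \<le> 1 - c * L" using L1 unfolding c_def by simp
      then have "real n * (419 / 500) \<le> real n * (1 - c * L)"
        by (intro mult_left_mono) auto
      moreover have "1/4 + (x + 1) / 2 \<le> x * (419 / 500)" if "3 \<le> x" for x :: real using that by (simp add: field_simps)
      note this[OF n3]
      ultimately show ?thesis using tail Hle by linarith
    qed
    have "(P - 2) * E m = P + (\<Sum>i<m. real ((m + 1) choose (i + 1)) * E i)"
      unfolding P_def n_def using E_rec 3 by simp
    also have "\<dots> \<le> P + (\<Sum>i<m. real ((m + 1) choose (i + 1)) * U i)"
      unfolding U_def L_def c_def using less by (intro add_left_mono sum_mono mult_left_mono) auto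
    also have "(\<Sum>i<m. real ((m + 1) choose (i + 1)) * U i)
       = (\<Sum>i<m. real ((m + 1) choose (i + 1)) * harm (i + 1)) / L - c * (\<Sum>i<m. real ((m + 1) choose (i + 1)))
         - (\<Sum>i<m. if i = 0 then real ((m + 1) choose (i + 1)) * (1 / L - c) else 0)"
      unfolding U_def sum_divide_distrib sum_distrib_left sum_subtractf[symmetric]
      by (rule sum.cong) (simp_all add: right_diff_distrib)
    also have "(\<Sum>i<m. if i = 0 then real ((m + 1) choose (i + 1)) * (1 / L - c) else 0) = real n * (1 / L - c)"
      using 3 by (simp add: n_def)
    finally have ineq: "(P - 2) * E m \<le> P + ((P * (H - Sn) - H) / L - c * (P - 2) - real n * (1 / L - c))"
      unfolding C1 C2 P_def H_def Sn_def n_def by simp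
    have "(P - 2) * (H / L - c) - (P + ((P * (H - Sn) - H) / L - c * (P - 2) - real n * (1 / L - c)))
       = (real n * (1 - c * L) - (P * (L - Sn) + H)) / L"
      using L0 by (simp add: field_simps)
    also have "\<dots> \<ge> 0" using key L0 by simp
    finally have "(P - 2) * E m \<le> (P - 2) * (H / L - c)" using ineq by linarith
    then have "E m \<le> H / L - c" using P8 by (subst (asm) mult_le_cancel_left_pos) auto
    then show ?thesis using 3 unfolding H_def L_def c_def n_def by simp
  qed
qed

theorem proposition1:
  fixes m :: nat
  shows "(harm (m + 1) - 1) / ln 2 \<le> real_of_rat (e_seq m)
       \<and> real_of_rat (e_seq m) < harm (m + 1) / ln 2 - 0.161
       \<and> harm (m + 1) / ln 2 - 0.161 < (harm (m + 1) :: real) / ln 2"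
proof (intro conjI)
  show "(harm (m + 1) - 1) / ln 2 \<le> real_of_rat (e_seq m)" by (rule low)
  show "harm (m + 1) / ln 2 - 0.161 < (harm (m + 1) :: real) / ln 2" by simp
  show "real_of_rat (e_seq m) < harm (m + 1) / ln 2 - 0.161"
  proof (cases "m = 0")
    case True
    have l0: "0 < ln (2::real)" by simp
    have "0.161 < 1 / ln (2::real)" using ln_2_less_1 l0 by (simp add: field_simps)
    then show ?thesis using True by (simp add: E0 harm_expand)
  next
    case False
    then show ?thesis using up[of m] by simp
  qed
qed

end
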